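(* Let $n\ge3$ and $x\in\mathbb{C}$, and let $A$ be the $n\times n$ tridiagonal matrix with all diagonal entries $x$, all subdiagonal entries $\mathbf{i}$, superdiagonal entries $A_{1,2}=A_{n-1,n}=2\mathbf{i}$ and $A_{k,k+1}=\mathbf{i}$ for $2\le k\le n-2$, where $\mathbf{i}=\sqrt{-1}$. Then $$\det(A)=(x^2+4)F_{n-1}(x).$$
   Context: The Fibonacci polynomials are defined by $F_0(x)=0$, $F_1(x)=1$, $F_n(x)=xF_{n-1}(x)+F_{n-2}(x)$ for $n\ge2$. *)

theory Defs
  imports Complex_Main "Jordan_Normal_Form.Determinant"
begin

fun fibpoly :: "nat \<Rightarrow> complex \<Rightarrow> complex" where
  "fibpoly 0 x = 0"
| "fibpoly (Suc 0) x = 1"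
| "fibpoly (Suc (Suc n)) x = x * fibpoly (Suc n) x + fibpoly n x"

text \<open>The n x n tridiagonal matrix of the statement, with 0-based indices:
  diagonal x, subdiagonal i, superdiagonal i except entries (0,1) and (n-2,n-1) which are 2i.\<close>
definition tri_mat :: "nat \<Rightarrow> complex \<Rightarrow> complex mat" where
  "tri_mat n x = mat n n (\<lambda>(r, c).
     if r = c then x
     else if r = c + 1 then \<i>
     else if c = r + 1 then (if r = 0 \<or> r = n - 2 then 2 * \<i> else \<i>)
     else 0)"

end

theory Submission
  imports Defs
begin

definition T :: "nat \<Rightarrow> complex \<Rightarrow> (nat \<Rightarrow> complex) \<Rightarrow> complex mat" where
  "T m x f = mat m m (\<lambda>(r, c).
     if r = c then x
     else if r = c + 1 then \<i>
     else if c = r + 1 then f r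
     else 0)"

lemma T_carrier: "T m x f \<in> carrier_mat m m" unfolding T_def by auto

lemma T_rec: "det (T (Suc (Suc m)) x f) = x * det (T (Suc m) x f) - \<i> * f m * det (T m x f)"
proof -
  let ?A = "T (Suc (Suc m)) x f"
  have "det ?A = (\<Sum>j<Suc (Suc m). ?A $$ (Suc m, j) * cofactor ?A (Suc m) j)"
    by (rule laplace_expansion_row[OF T_carrier]) auto
  also have "\<dots> = (\<Sum>j<m. ?A $$ (Suc m, j) * cofactor ?A (Suc m) j)
      + ?A $$ (Suc m, m) * cofactor ?A (Suc m) m + ?A $$ (Suc m, Suc m) * cofactor ?A (Suc m) (Suc m)"
    by simp
  also have "(\<Sum>j<m. ?A $$ (Suc m, j) * cofactor ?A (Suc m) j) = 0"
    by (rule sum.neutral) (auto simp: T_def)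
  finally have e1: "det ?A = \<i> * cofactor ?A (Suc m) m + x * cofactor ?A (Suc m) (Suc m)"
    by (simp add: T_def)
  have d1: "mat_delete ?A (Suc m) (Suc m) = T (Suc m) x f"
    by (rule eq_matI) (auto simp: T_def mat_delete_def)
  let ?B = "mat_delete ?A (Suc m) m"
  have Bc: "?B \<in> carrier_mat (Suc m) (Suc m)"
    using mat_delete_carrier[OF T_carrier, of "Suc (Suc m)" x f "Suc m" m] by simp
  have "det ?B = (\<Sum>i<Suc m. ?B $$ (i, m) * cofactor ?B i m)"
    by (rule laplace_expansion_column[OF Bc]) auto
  also have "\<dots> = (\<Sum>i<m. ?B $$ (i, m) * cofactor ?B i m) + ?B $$ (m, m) * cofactor ?B m m"
    by simp
  also have "(\<Sum>i<m. ?B $$ (i, m) * cofactor ?B i m) = 0"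
    by (rule sum.neutral) (auto simp: T_def mat_delete_def)
  finally have e2: "det ?B = f m * cofactor ?B m m"
    by (simp add: T_def mat_delete_def)
  have d2: "mat_delete ?B m m = T m x f"
    by (rule eq_matI) (auto simp: T_def mat_delete_def)
  have "cofactor ?B m m = det (T m x f)"
    unfolding cofactor_def d2 by (simp add: power_add[symmetric] mult_2[symmetric])
  have p: "(-1::complex) ^ (Suc m + m) = -1"
    by (simp add: add.commute)
  have "cofactor ?A (Suc m) m = - (f m * det (T m x f))"
    unfolding cofactor_def p e2 unfolding cofactor_def d2
    by (simp add: power_add[symmetric] mult_2[symmetric])
  moreover have "cofactor ?A (Suc m) (Suc m) = det (T (Suc m) x f)"
    unfolding cofactor_def d1 by (simp add: power_add[symmetric] mult_2[symmetric])
  ultimately show ?thesis using e1 by (simp add: algebra_simps)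
qed

lemma T_cong: "(\<And>r. Suc r < k \<Longrightarrow> f r = g r) \<Longrightarrow> T k x f = T k x g"
  by (rule eq_matI) (auto simp: T_def)

lemma det1: "det (mat (Suc 0) (Suc 0) (\<lambda>_. y)) = (y::complex)"
  by (subst det_upper_triangular[of _ 1]) (auto simp: upper_triangular_def diag_mat_def)

definition g0 :: "nat \<Rightarrow> complex" where "g0 r = (if r = 0 then 2 * \<i> else \<i>)"

lemma detg: "det (T (Suc k) x g0) = x * fibpoly (Suc k) x + 2 * fibpoly k x"
proof (induction k rule: nat_less_induct)
  case (1 k)
  show ?case
  proof (cases k)
    case 0
    have "T 1 x g0 = mat 1 1 (\<lambda>_. x)" by (rule eq_matI) (auto simp: T_def)
    then show ?thesis using 0 by (simp add: det1)
  next
    case (Suc j)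
    note S = Suc
    show ?thesis
    proof (cases j)
      case 0
      have "det (T 2 x g0) = x * det (T 1 x g0) - \<i> * g0 0 * det (T 0 x g0)"
        using T_rec[of 0 x g0] by (simp add: numeral_2_eq_2)
      moreover have "T 1 x g0 = mat 1 1 (\<lambda>_. x)" by (rule eq_matI) (auto simp: T_def)
      moreover have "det (T 0 x g0) = 1" using T_carrier by simp
      moreover have "\<i> * (2 * \<i>) = (-2::complex)" by (simp add: mult.left_commute)
      ultimately show ?thesis using S 0 by (simp add: det1 numeral_2_eq_2 power2_eq_square g0_def[of 0])
    next
      case (Suc i)
      have r: "det (T (Suc (Suc (Suc i))) x g0) = x * det (T (Suc (Suc i)) x g0) - \<i> * g0 (Suc i) * det (T (Suc i) x g0)"
        by (rule T_rec)
      have a: "det (T (Suc (Suc i)) x g0) = x * fibpoly (Suc (Suc i)) x + 2 * fibpoly (Suc i) x"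
        using 1 S Suc by auto
      have b: "det (T (Suc i) x g0) = x * fibpoly (Suc i) x + 2 * fibpoly i x"
        using 1 S Suc by auto
      show ?thesis using S Suc r a b
        by (simp add: g0_def[of "Suc i"] algebra_simps)
    qed
  qed
qed

theorem theorem12:
  fixes n :: nat and x :: complex
  assumes "n \<ge> 3"
  shows "det (tri_mat n x) = (x\<^sup>2 + 4) * fibpoly (n - 1) x"
proof -
  obtain m where n: "n = Suc (Suc (Suc m))" 
    using assms by (intro that[of "n - 3"]) arith
  define f where "f r = (if r = 0 \<or> r = n - 2 then 2 * \<i> else \<i>)" for r
  have t: "tri_mat n x = T n x f"
    by (rule eq_matI) (auto simp: T_def tri_mat_def f_def)
  have c1: "T (Suc (Suc m)) x f = T (Suc (Suc m)) x g0"
    by (rule T_cong) (auto simp: f_def g0_def n)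
  have c2: "T (Suc m) x f = T (Suc m) x g0"
    by (rule T_cong) (auto simp: f_def g0_def n)
  have "det (tri_mat n x) = x * det (T (Suc (Suc m)) x f) - \<i> * f (Suc m) * det (T (Suc m) x f)"
    unfolding t using T_rec[of "Suc m" x f] by (simp only: n)
  also have "\<dots> = x * (x * fibpoly (Suc (Suc m)) x + 2 * fibpoly (Suc m) x)
      + 2 * (x * fibpoly (Suc m) x + 2 * fibpoly m x)"
    unfolding c1 c2 detg by (simp add: f_def n algebra_simps)
  also have "\<dots> = (x\<^sup>2 + 4) * fibpoly (n - 1) x"
    by (simp add: n algebra_simps power2_eq_square)
  finally show ?thesis .
qed

end
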